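(* Under the setup in the context, assume in addition that $S_0$ is nonsingular. Then the sines of the $L$ principal angles between $\mathcal R(F_0)$ and $\mathcal R(AW_j)$ (which equals $A\mathbb K_j(A,F_0)$ when no replacement of dependent Arnoldi vectors has occurred) are the singular values of the product $Q_j^{(21)}Q_{j-1}^{(21)}\cdots Q_1^{(21)}$.
   Context: Let $n,L\ge1$, $A\in\mathbb C^{n\times n}$, $B,X_0\in\mathbb C^{n\times L}$, $F_0=B-AX_0$, and let $F_0=V_1S_0$ be a reduced QR factorization ($V_1\in\mathbb C^{n\times L}$ with orthonormal columns, $S_0\in\mathbb C^{L\times L}$ upper triangular). Fix $j\ge1$. The block Arnoldi process (possibly with dependent basis vectors replaced by new orthonormal vectors) yields $W_k=[V_1,\dots,V_k]\in\mathbb C^{n\times kL}$ ($k\le j+1$) with orthonormal columns, $V_i\in\mathbb C^{n\times L}$, and the block Arnoldi relation $AW_j=W_{j+1}\bar H_j$, where $\bar H_j=(H_{ik})\in\mathbb C^{(j+1)L\times jL}$ has $L\times L$ blocks $H_{ik}$, is block upper Hessenberg ($H_{ik}=0$ for $i>k+1$), and each $H_{k+1,k}$ is upper triangular. For $k\le j$, $\bar H_k$ denotes the leading $(k+1)L\times kL$ submatrix of $\bar H_j$. $\mathbb K_j(A,F_0)$ is the span of all columns of $F_0,AF_0,\dots,A^{j-1}F_0$. Block QR factorization: assume $\bar H_j$ has full column rank. There are unitary matrices $\Omega_i=\begin{bmatrix}Q_i^{(11)}&Q_i^{(12)}\\Q_i^{(21)}&Q_i^{(22)}\end{bmatrix}\in\mathbb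 C^{2L\times 2L}$ ($i=1,\dots,j$, all four blocks $L\times L$); for $m\ge i+1$ put $Q_i^{(m)}=\mathrm{diag}(I_{(i-1)L},\Omega_i,I_{(m-i-1)L})\in\mathbb C^{mL\times mL}$ and $\bar Q_k=Q_k^{(k+1)}Q_{k-1}^{(k+1)}\cdots Q_1^{(k+1)}$. The $\Omega_i$ are chosen recursively so that $\bar Q_k\bar H_k=\begin{bmatrix}R_k\\ 0_{L\times kL}\end{bmatrix}$ with $R_k\in\mathbb C^{kL\times kL}$ upper triangular and nonsingular ($k=1,\dots,j$). Principal angles: for subspaces $\mathcal U,\mathcal W$ of $\mathbb C^n$ with $\dim\mathcal U=p\le\dim\mathcal W$ and matrices $U,W$ with orthonormal columns spanning them, the $p$ principal angles $\theta_1,\dots,\theta_p\in[0,\pi/2]$ are defined by: $\cos\theta_1,\dots,\cos\theta_p$ are the singular values of $W^*U$. $\mathcal R(\cdot)$ denotes column space. *)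

theory Defs
  imports "Jordan_Normal_Form.Schur_Decomposition" "Jordan_Normal_Form.Char_Poly"
begin

definition subm :: "'a mat \<Rightarrow> nat \<Rightarrow> nat \<Rightarrow> nat \<Rightarrow> nat \<Rightarrow> 'a mat" where
  "subm M r0 c0 nr nc = mat nr nc (\<lambda>(r,c). M $$ (r0 + r, c0 + c))"

definition orthonormal_cols :: "complex mat \<Rightarrow> bool" where
  "orthonormal_cols U \<longleftrightarrow> mat_adjoint U * U = 1\<^sub>m (dim_col U)"

definition unitary_mat :: "complex mat \<Rightarrow> bool" where
  "unitary_mat U \<longleftrightarrow> mat_adjoint U * U = 1\<^sub>m (dim_col U) \<and> U * mat_adjoint U = 1\<^sub>m (dim_row U)"

definition col_space :: "complex mat \<Rightarrow> complex vec set" where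
  "col_space M = {M *\<^sub>v v | v. v \<in> carrier_vec (dim_col M)}"

definition singular_values :: "complex mat \<Rightarrow> real multiset" where
  "singular_values M = image_mset (\<lambda>z. sqrt (Re z)) (proots (char_poly (mat_adjoint M * M)))"

(* principal angles between R(U) and R(W), U, W with orthonormal columns,
   dim R(U) <= dim R(W): cosines are the singular values of W^* U *)
definition principal_angles :: "complex mat \<Rightarrow> complex mat \<Rightarrow> real multiset" where
  "principal_angles U W = image_mset arccos (singular_values (mat_adjoint W * U))"

(* Q_i^{(m)} = diag(I_{(i-1)L}, Omega_i, I_{(m-i-1)L}) *)
definition embed_rot :: "nat \<Rightarrow> nat \<Rightarrow> nat \<Rightarrow> complex mat \<Rightarrow> complex mat" where
  "embed_rot L m i Om = mat (m*L) (m*L) (\<lambda>(r,c).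
     if (i-1)*L \<le> r \<and> r < (i+1)*L \<and> (i-1)*L \<le> c \<and> c < (i+1)*L
     then Om $$ (r - (i-1)*L, c - (i-1)*L)
     else if r = c then 1 else 0)"

(* qprod L Om m k = Q_k^{(m)} Q_{k-1}^{(m)} ... Q_1^{(m)};  Qbar_k = qprod L Om (k+1) k *)
fun qprod :: "nat \<Rightarrow> (nat \<Rightarrow> complex mat) \<Rightarrow> nat \<Rightarrow> nat \<Rightarrow> complex mat" where
  "qprod L Om m 0 = 1\<^sub>m (m*L)"
| "qprod L Om m (Suc k) = embed_rot L m (Suc k) (Om (Suc k)) * qprod L Om m k"

definition q21 :: "nat \<Rightarrow> complex mat \<Rightarrow> complex mat" where
  "q21 L Om = subm Om L 0 L L"

fun q21prod :: "nat \<Rightarrow> (nat \<Rightarrow> complex mat) \<Rightarrow> nat \<Rightarrow> complex mat" where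
  "q21prod L Om 0 = 1\<^sub>m L"
| "q21prod L Om (Suc k) = q21 L (Om (Suc k)) * q21prod L Om k"

end

theory Submission
  imports Defs
begin


type_synonym cmat = "complex mat"


lemma adj_alt: "mat_adjoint (A::cmat) = mat (dim_col A) (dim_row A) (\<lambda>(i,k). cnj (A $$ (k,i)))"
  unfolding mat_adjoint_def
  by (rule eq_matI, auto simp: mat_of_rows_index)

lemma adj_carrier[simp]: "(A::cmat) \<in> carrier_mat a b \<Longrightarrow> mat_adjoint A \<in> carrier_mat b a"
  by (auto simp: adj_alt)
lemma adj_dims[simp]: "dim_row (mat_adjoint (A::cmat)) = dim_col A" "dim_col (mat_adjoint (A::cmat)) = dim_row A"
  by (auto simp: adj_alt)
lemma adj_index[simp]: "i < dim_col (A::cmat) \<Longrightarrow> k < dim_row A \<Longrightarrow> mat_adjoint A $$ (i,k) = cnj (A $$ (k,i))"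
  by (auto simp: adj_alt)

lemma adj_adj[simp]: "mat_adjoint (mat_adjoint (A::cmat)) = A"
  by (rule eq_matI, auto)

lemma adj_one[simp]: "mat_adjoint (1\<^sub>m n :: cmat) = 1\<^sub>m n"
  by (rule eq_matI, auto)

lemma adj_mult: assumes "(A::cmat) \<in> carrier_mat a b" "B \<in> carrier_mat b c"
  shows "mat_adjoint (A * B) = mat_adjoint B * mat_adjoint A"
proof (rule eq_matI)
  fix i k assume i: "i < dim_row (mat_adjoint B * mat_adjoint A)" and k: "k < dim_col (mat_adjoint B * mat_adjoint A)"
  show "mat_adjoint (A * B) $$ (i, k) = (mat_adjoint B * mat_adjoint A) $$ (i, k)"
    using assms i k by (auto simp: scalar_prod_def sum_conjugate[symmetric] intro!: sum.cong)
qed (use assms in auto)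

lemma adj_minus: assumes "(A::cmat) \<in> carrier_mat a b" "B \<in> carrier_mat a b"
  shows "mat_adjoint (A - B) = mat_adjoint A - mat_adjoint B"
  using assms by (intro eq_matI, auto)

lemma adj_mult_index: assumes "(X::cmat) \<in> carrier_mat n a" "Y \<in> carrier_mat n b" "r < a" "c < b"
  shows "(mat_adjoint X * Y) $$ (r,c) = (\<Sum>i<n. cnj (X $$ (i,r)) * Y $$ (i,c))"
  using assms by (auto simp: scalar_prod_def lessThan_atLeast0 intro!: sum.cong)

lemma adj_vec: assumes A: "(A::cmat) \<in> carrier_mat a b" and v: "v \<in> carrier_vec b" and x: "x \<in> carrier_vec a"
  shows "(A *\<^sub>v v) \<bullet>c x = v \<bullet>c (mat_adjoint A *\<^sub>v x)"
proof -
  have "(A *\<^sub>v v) \<bullet>c x = (\<Sum>i<a. (\<Sum>l<b. A $$ (i,l) * v $ l) * cnj (x $ i))"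
    using A v x by (auto simp: scalar_prod_def lessThan_atLeast0 intro!: sum.cong)
  also have "\<dots> = (\<Sum>l<b. v $ l * (\<Sum>i<a. cnj (cnj (A $$ (i,l)) * x $ i)))"
    by (simp add: sum_distrib_left sum_distrib_right mult_ac sum.swap[of _ "{..<a}"])
  also have "\<dots> = v \<bullet>c (mat_adjoint A *\<^sub>v x)"
    using A v x by (auto simp: scalar_prod_def lessThan_atLeast0 sum_conjugate intro!: sum.cong)
  finally show ?thesis .
qed



definition tr :: "cmat \<Rightarrow> complex" where "tr A = (\<Sum>i<dim_row A. A $$ (i,i))"

lemma tr_comm: assumes "(A::cmat) \<in> carrier_mat a b" "B \<in> carrier_mat b a"
  shows "tr (A * B) = tr (B * A)"
proof -
  have "tr (A * B) = (\<Sum>i<a. \<Sum>l<b. A $$ (i,l) * B $$ (l,i))"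
    using assms by (auto simp: tr_def scalar_prod_def lessThan_atLeast0 intro!: sum.cong)
  also have "\<dots> = (\<Sum>l<b. \<Sum>i<a. B $$ (l,i) * A $$ (i,l))"
    by (subst sum.swap, simp add: mult_ac)
  also have "\<dots> = tr (B * A)"
    using assms by (auto simp: tr_def scalar_prod_def lessThan_atLeast0 intro!: sum.cong)
  finally show ?thesis .
qed

lemma tr_one[simp]: "tr (1\<^sub>m n) = of_nat n"
  by (simp add: tr_def)

lemma orth_dim: assumes "(G::cmat) \<in> carrier_mat a b"
  "mat_adjoint G * G = 1\<^sub>m b" "G * mat_adjoint G = 1\<^sub>m a"
shows "a = b"
proof -
  have "tr (mat_adjoint G * G) = tr (G * mat_adjoint G)"
    using assms by (intro tr_comm, auto)
  thus ?thesis using assms by simp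
qed

lemma orthD: "orthonormal_cols (Y::cmat) \<Longrightarrow> Y \<in> carrier_mat n k \<Longrightarrow> mat_adjoint Y * Y = 1\<^sub>m k"
  unfolding orthonormal_cols_def by auto

lemma proj_fix: assumes Y: "(Y::cmat) \<in> carrier_mat n k" and o: "orthonormal_cols Y"
  and x: "x \<in> col_space Y"
  shows "Y *\<^sub>v (mat_adjoint Y *\<^sub>v x) = x"
proof -
  from x obtain v where v: "v \<in> carrier_vec k" and xv: "x = Y *\<^sub>v v"
    using Y unfolding col_space_def by auto
  have "mat_adjoint Y *\<^sub>v x = (mat_adjoint Y * Y) *\<^sub>v v"
    using Y v xv by (simp add: assoc_mult_mat_vec[of _ k n _ k])
  also have "\<dots> = v" using orthD[OF o Y] v by simp
  finally show ?thesis using xv by simp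
qed

lemma col_in: "(Z::cmat) \<in> carrier_mat n m \<Longrightarrow> c < m \<Longrightarrow> col Z c \<in> col_space Z"
  unfolding col_space_def
  by (rule CollectI, rule exI[of _ "unit_vec m c"], auto simp: mult_mat_vec_def)

lemma proj_fix_mat: assumes Y: "(Y::cmat) \<in> carrier_mat n k" and o: "orthonormal_cols Y"
  and Z: "Z \<in> carrier_mat n m" and sub: "col_space Z \<subseteq> col_space Y"
  shows "Y * (mat_adjoint Y * Z) = Z"
proof (rule mat_col_eqI)
  fix c assume c: "c < dim_col Z"
  have a: "col (Y * (mat_adjoint Y * Z)) c = Y *\<^sub>v col (mat_adjoint Y * Z) c"
    using Y Z c by (intro col_mult2[of _ n k _ m], auto)
  have b: "col (mat_adjoint Y * Z) c = mat_adjoint Y *\<^sub>v col Z c"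
    using Y Z c by (intro col_mult2[of _ k n _ m], auto)
  have "col (Y * (mat_adjoint Y * Z)) c = Y *\<^sub>v (mat_adjoint Y *\<^sub>v col Z c)" using a b by simp
  also have "\<dots> = col Z c" using proj_fix[OF Y o] col_in[OF Z] sub c Z by auto
  finally show "col (Y * (mat_adjoint Y * Z)) c = col Z c" .
qed (use Y Z in auto)

lemma proj_eq: assumes Y: "(Y::cmat) \<in> carrier_mat n k" and oY: "orthonormal_cols Y"
  and Z: "Z \<in> carrier_mat n m" and oZ: "orthonormal_cols Z" and eq: "col_space Y = col_space Z"
  shows "Y * mat_adjoint Y = Z * mat_adjoint Z"
proof -
  have 1: "Y * (mat_adjoint Y * Z) = Z" using proj_fix_mat[OF Y oY Z] eq by auto
  have 2: "Z * (mat_adjoint Z * Y) = Y" using proj_fix_mat[OF Z oZ Y] eq by auto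
  have "mat_adjoint (Y * (mat_adjoint Y * Z)) = mat_adjoint (mat_adjoint Y * Z) * mat_adjoint Y"
    using Y Z by (intro adj_mult[of _ n k _ m], auto)
  also have "mat_adjoint (mat_adjoint Y * Z) = mat_adjoint Z * Y"
    using Y Z adj_mult[of "mat_adjoint Y" k n Z m] by auto
  finally have "mat_adjoint Z * Y * mat_adjoint Y = mat_adjoint (Y * (mat_adjoint Y * Z))" by simp
  also have "\<dots> = mat_adjoint Z" using 1 by simp
  finally have 3: "mat_adjoint Z * Y * mat_adjoint Y = mat_adjoint Z" .
  have "Y * mat_adjoint Y = Z * (mat_adjoint Z * Y) * mat_adjoint Y" using 2 by simp
  also have "\<dots> = Z * (mat_adjoint Z * Y * mat_adjoint Y)"
    using Y Z by (intro assoc_mult_mat[of _ n m _ k _ n], auto)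
  also have "\<dots> = Z * mat_adjoint Z" using 3 by simp
  finally show ?thesis .
qed

lemma col_space_mult_inv: assumes A: "(A::cmat) \<in> carrier_mat n k" and S: "S \<in> carrier_mat k k"
  and d: "det S \<noteq> 0"
  shows "col_space (A * S) = col_space A"
proof -
  from det_non_zero_imp_unit[OF S d, of undefined]
  obtain S' where S': "S' \<in> carrier_mat k k" and SS': "S * S' = 1\<^sub>m k"
    unfolding Units_def ring_mat_def by auto
  show ?thesis
  proof
    show "col_space (A * S) \<subseteq> col_space A"
    proof
      fix x assume "x \<in> col_space (A * S)"
      then obtain v where v: "v \<in> carrier_vec k" and x: "x = (A * S) *\<^sub>v v"
        using A S unfolding col_space_def by auto
      have "x = A *\<^sub>v (S *\<^sub>v v)" using x A S v by auto
      thus "x \<in> col_space A" using A S v unfolding col_space_def by auto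
    qed
    show "col_space A \<subseteq> col_space (A * S)"
    proof
      fix x assume "x \<in> col_space A"
      then obtain v where v: "v \<in> carrier_vec k" and x: "x = A *\<^sub>v v"
        using A unfolding col_space_def by auto
      have "(A * S) *\<^sub>v (S' *\<^sub>v v) = A *\<^sub>v (S *\<^sub>v (S' *\<^sub>v v))" using A S S' v by auto
      also have "S *\<^sub>v (S' *\<^sub>v v) = (S * S') *\<^sub>v v" using S S' v by auto
      finally have "x = (A * S) *\<^sub>v (S' *\<^sub>v v)" using x SS' v by auto
      thus "x \<in> col_space (A * S)" using A S S' v unfolding col_space_def
        by (intro CollectI exI[of _ "S' *\<^sub>v v"], auto)
    qed
  qed
qed



lemma proots_lin_prod: "proots (\<Prod>a\<leftarrow>xs. [:- a, 1:]) = mset (xs :: complex list)"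
proof (induction xs)
  case Nil then show ?case by simp
next
  case (Cons x xs)
  have nz: "(\<Prod>a\<leftarrow>xs. [:- a, 1::complex:]) \<noteq> 0"
    by (auto simp: prod_list_zero_iff)
  have "proots ([:- x, 1:] * (\<Prod>a\<leftarrow>xs. [:- a, 1:])) = proots [:- x, 1:] + proots (\<Prod>a\<leftarrow>xs. [:- a, 1:])"
    by (rule proots_mult, simp, rule nz)
  then show ?case using Cons by simp
qed

lemma csmult_c: assumes "v \<in> carrier_vec n"
  shows "v \<bullet>c (e \<cdot>\<^sub>v v) = cnj e * (v \<bullet>c v)"
  using assms by (simp add: conjugate_smult_vec)

lemma Meq_lem:
  assumes K: "(K::cmat) \<in> carrier_mat m L" and P: "P \<in> carrier_mat L L"
  and sum1: "mat_adjoint K * K + mat_adjoint P * P = 1\<^sub>m L"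
  shows "mat_adjoint K * K = 1\<^sub>m L - mat_adjoint P * P"
proof (rule eq_matI)
  let ?N = "mat_adjoint P * P" and ?M = "mat_adjoint K * K"
  have N: "?N \<in> carrier_mat L L" and M: "?M \<in> carrier_mat L L" using K P by auto
  fix i k assume "i < dim_row (1\<^sub>m L - ?N)" "k < dim_col (1\<^sub>m L - ?N)"
  hence ik: "i < L" "k < L" using N by auto
  have "(?M + ?N) $$ (i,k) = 1\<^sub>m L $$ (i,k)" using sum1 by simp
  moreover have "(?M + ?N) $$ (i,k) = ?M $$ (i,k) + ?N $$ (i,k)" using ik M N by (intro index_add_mat, auto)
  ultimately have a: "?M $$ (i,k) + ?N $$ (i,k) = 1\<^sub>m L $$ (i,k)" by simp
  have b: "(1\<^sub>m L - ?N) $$ (i,k) = 1\<^sub>m L $$ (i,k) - ?N $$ (i,k)" using ik M N by (intro index_minus_mat, auto)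
  show "?M $$ (i,k) = (1\<^sub>m L - ?N) $$ (i,k)" unfolding b a[symmetric] by simp
qed (use K P in auto)

lemma eig_bound:
  assumes K: "(K::cmat) \<in> carrier_mat m L" and P: "P \<in> carrier_mat L L"
  and sum1: "mat_adjoint K * K + mat_adjoint P * P = 1\<^sub>m L"
  and ev: "eigenvalue (mat_adjoint P * P) e"
  shows "Im e = 0 \<and> 0 \<le> Re e \<and> Re e \<le> 1"
proof -
  let ?N = "mat_adjoint P * P" and ?M = "mat_adjoint K * K"
  have N: "?N \<in> carrier_mat L L" and M: "?M \<in> carrier_mat L L" using K P by auto
  from ev obtain v where v: "v \<in> carrier_vec L" and v0: "v \<noteq> 0\<^sub>v L" and Nv: "?N *\<^sub>v v = e \<cdot>\<^sub>v v"
    unfolding eigenvalue_def eigenvector_def using N by auto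
  define s where "s = v \<bullet>c v"
  have s: "s > 0" unfolding s_def using v v0 by simp
  have "(P *\<^sub>v v) \<bullet>c (P *\<^sub>v v) = v \<bullet>c (mat_adjoint P *\<^sub>v (P *\<^sub>v v))"
    by (rule adj_vec[OF P v], use P v in auto)
  also have "\<dots> = v \<bullet>c (?N *\<^sub>v v)" using P v by (simp add: assoc_mult_mat_vec[of _ L L _ L])
  also have "\<dots> = cnj e * s" unfolding Nv s_def by (rule csmult_c[OF v])
  finally have x1: "(P *\<^sub>v v) \<bullet>c (P *\<^sub>v v) = cnj e * s" .
  have "(K *\<^sub>v v) \<bullet>c (K *\<^sub>v v) = v \<bullet>c (mat_adjoint K *\<^sub>v (K *\<^sub>v v))"
    by (rule adj_vec[OF K v], use K v in auto)
  also have "\<dots> = v \<bullet>c (?M *\<^sub>v v)" using K v by (simp add: assoc_mult_mat_vec[of _ L m _ L])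
  finally have x2: "(K *\<^sub>v v) \<bullet>c (K *\<^sub>v v) = v \<bullet>c (?M *\<^sub>v v)" .
  have "?M *\<^sub>v v = (1\<^sub>m L - ?N) *\<^sub>v v" using Meq_lem[OF K P sum1] by simp
  also have "\<dots> = 1\<^sub>m L *\<^sub>v v - ?N *\<^sub>v v" using N v by (intro minus_mult_distrib_mat_vec, auto)
  finally have "?M *\<^sub>v v = v - e \<cdot>\<^sub>v v" using Nv v by auto
  also have "\<dots> = (1 - e) \<cdot>\<^sub>v v" using v by (auto simp: algebra_simps)
  finally have "v \<bullet>c (?M *\<^sub>v v) = cnj (1 - e) * s" unfolding s_def using csmult_c[OF v] by simp
  with x2 have x2': "(K *\<^sub>v v) \<bullet>c (K *\<^sub>v v) = cnj (1 - e) * s" by simp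
  have g1: "cnj e * s \<ge> 0" using x1 conjugate_square_ge_0_vec by metis
  have g2: "cnj (1 - e) * s \<ge> 0" using x2' conjugate_square_ge_0_vec by metis
  from s have sr: "Im s = 0" "Re s > 0" by (auto simp: less_complex_def)
  from g1 g2 sr show ?thesis
    by (auto simp: less_eq_complex_def zero_le_mult_iff)
qed

lemma spectral:
  assumes K: "(K::cmat) \<in> carrier_mat m L" and P: "P \<in> carrier_mat L L"
  and sum1: "mat_adjoint K * K + mat_adjoint P * P = 1\<^sub>m L"
  shows "image_mset sin (image_mset arccos (image_mset (\<lambda>z. sqrt (Re z)) (proots (char_poly (mat_adjoint K * K)))))
       = image_mset (\<lambda>z. sqrt (Re z)) (proots (char_poly (mat_adjoint P * P)))"
proof -
  let ?N = "mat_adjoint P * P" and ?M = "mat_adjoint K * K"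
  have N: "?N \<in> carrier_mat L L" and M: "?M \<in> carrier_mat L L" using K P by auto
  from char_poly_factorized[OF N] obtain es where es: "char_poly ?N = (\<Prod>a\<leftarrow>es. [:- a, 1:])" by auto
  obtain B Pm Qm where sd: "schur_decomposition ?N es = (B, Pm, Qm)" by (cases "schur_decomposition ?N es", auto)
  from schur_decomposition[OF N es sd] have sw: "similar_mat_wit ?N B Pm Qm" and ut: "upper_triangular B"
    and dg: "diag_mat B = es" by auto
  from similar_mat_witD2[OF N sw] have B: "B \<in> carrier_mat L L" and Pm: "Pm \<in> carrier_mat L L"
    and Qm: "Qm \<in> carrier_mat L L" and PQ: "Pm * Qm = 1\<^sub>m L" and QP: "Qm * Pm = 1\<^sub>m L"
    and NB: "?N = Pm * B * Qm" by auto
  have Meq: "?M = 1\<^sub>m L - ?N" by (rule Meq_lem[OF K P sum1])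
  have "Pm * (1\<^sub>m L - B) * Qm = 1\<^sub>m L - ?N"
  proof -
    have "Pm * (1\<^sub>m L - B) = Pm - Pm * B" using Pm B by (subst mult_minus_distrib_mat[of _ L L _ L], auto)
    hence "Pm * (1\<^sub>m L - B) * Qm = (Pm - Pm * B) * Qm" by simp
    also have "\<dots> = Pm * Qm - Pm * B * Qm" using Pm B Qm by (simp add: minus_mult_distrib_mat[of _ L L])
    finally show ?thesis using PQ NB by simp
  qed
  hence sw2: "similar_mat_wit ?M (1\<^sub>m L - B) Pm Qm" unfolding similar_mat_wit_def Let_def
    using Meq M B Pm Qm PQ QP P by auto
  have ut2: "upper_triangular (1\<^sub>m L - B)" using ut B unfolding upper_triangular_def by auto
  have dg2: "diag_mat (1\<^sub>m L - B) = map (\<lambda>e. 1 - e) es"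
    using dg B unfolding diag_mat_def by (auto intro!: nth_equalityI)
  have "char_poly ?M = char_poly (1\<^sub>m L - B)"
    by (rule char_poly_similar, unfold similar_mat_def, use sw2 in blast)
  also have "\<dots> = (\<Prod>a\<leftarrow>map (\<lambda>e. 1 - e) es. [:- a, 1:])"
    using char_poly_upper_triangular[of "1\<^sub>m L - B" L] ut2 B dg2 by (metis minus_carrier_mat one_carrier_mat)
  finally have cpM: "char_poly ?M = (\<Prod>a\<leftarrow>map (\<lambda>e. 1 - e) es. [:- a, 1:])" .
  have cM: "proots (char_poly ?M) = mset (map (\<lambda>e. 1 - e) es)" by (simp only: cpM proots_lin_prod)
  have cN: "proots (char_poly ?N) = mset es" using es by (simp add: proots_lin_prod)
  have bnd: "Im e = 0 \<and> 0 \<le> Re e \<and> Re e \<le> 1" if "e \<in> set es" for e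
  proof -
    have "poly (char_poly ?N) e = 0" using that es
      by (simp add: poly_prod_list_zero_iff)
    hence "eigenvalue ?N e" using eigenvalue_root_char_poly[OF N] by simp
    thus ?thesis by (rule eig_bound[OF K P sum1])
  qed
  have pt: "sin (arccos (sqrt (Re (1 - e)))) = sqrt (Re e)" if "e \<in> set es" for e
  proof -
    from bnd[OF that] have r: "0 \<le> Re e" "Re e \<le> 1" by auto
    have a: "0 \<le> sqrt (1 - Re e)" "sqrt (1 - Re e) \<le> 1" using r by auto
    have "sin (arccos (sqrt (1 - Re e))) = sqrt (1 - (sqrt (1 - Re e))\<^sup>2)"
      by (rule sin_arccos, use a in linarith, use a in linarith)
    also have "\<dots> = sqrt (Re e)" using r by simp
    finally show ?thesis by simp
  qed
  show ?thesis unfolding cM cN using pt by (simp add: image_mset.compositionality o_def, intro image_mset_cong, simp)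
qed



lemma sum_split_add: "(\<Sum>t<a+b. (g::nat\<Rightarrow>'b::comm_monoid_add) t) = (\<Sum>t<a. g t) + (\<Sum>t<b. g (a+t))"
  by (induction b, auto simp: add.assoc)

lemma sum_window:
  fixes f :: "nat \<Rightarrow> 'b::comm_monoid_add" and a w N :: nat
  assumes "a + w \<le> N" and z: "\<And>l. l < N \<Longrightarrow> l < a \<or> a + w \<le> l \<Longrightarrow> f l = 0"
  shows "(\<Sum>l<N. f l) = (\<Sum>t<w. f (a+t))"
proof -
  have "(\<Sum>l<N. f l) = (\<Sum>l<a. f l) + (\<Sum>t<N-a. f (a+t))"
    using sum_split_add[where a=a and b="N-a" and g=f] assms(1) by simp
  also have "(\<Sum>l<a. f l) = 0" using z assms(1) by (intro sum.neutral, auto)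
  also have "(\<Sum>t<N-a. f (a+t)) = (\<Sum>t<w. f (a+t)) + (\<Sum>t<N-a-w. f (a+(w+t)))"
    using sum_split_add[where a=w and b="N-a-w" and g="\<lambda>t. f (a+t)"] assms(1) by simp
  also have "(\<Sum>t<N-a-w. f (a+(w+t))) = 0" using z assms(1) by (intro sum.neutral, auto)
  finally show ?thesis by simp
qed

lemma embed_carrier[simp]: "embed_rot L m i Om \<in> carrier_mat (m*L) (m*L)"
  unfolding embed_rot_def by auto

lemma qprod_carrier[simp]: "qprod L Om m k \<in> carrier_mat (m*L) (m*L)"
  by (induction k) (auto intro: mult_carrier_mat[of _ "m*L" "m*L"])

lemma q21prod_carrier[simp]: "q21prod L Om k \<in> carrier_mat L L"
  by (induction k, auto simp: q21_def subm_def)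




lemma embed_dims[simp]: "dim_row (embed_rot L m i Om) = m*L" "dim_col (embed_rot L m i Om) = m*L"
  unfolding embed_rot_def by auto

lemma embed_unitary:
  assumes i: "1 \<le> i" "i + 1 \<le> m" and Om: "Om \<in> carrier_mat (2*L) (2*L)"
    and u: "mat_adjoint Om * Om = 1\<^sub>m (2*L)"
  shows "mat_adjoint (embed_rot L m i Om) * embed_rot L m i Om = 1\<^sub>m (m*L)"
proof (rule eq_matI)
  let ?E = "embed_rot L m i Om"
  define a where "a = (i-1)*L"
  have ia: "(i+1)*L = a + 2*L" using i unfolding a_def by (cases i, auto simp: algebra_simps)
  have am: "a + 2*L \<le> m*L" using i ia by (metis mult_le_mono1)
  have ia': "(i-1)*L + 2*L = (i+1)*L" using ia unfolding a_def by simp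
  have Eidx: "\<And>r c. r < m*L \<Longrightarrow> c < m*L \<Longrightarrow> ?E $$ (r,c) =
      (if a \<le> r \<and> r < a + 2*L \<and> a \<le> c \<and> c < a + 2*L then Om $$ (r - a, c - a) else if r = c then 1 else 0)"
    unfolding embed_rot_def a_def ia' by (simp split del: if_split)
  fix r c assume "r < dim_row (1\<^sub>m (m*L))" "c < dim_col (1\<^sub>m (m * L))"
  hence rc: "r < m*L" "c < m*L" by auto
  have "(mat_adjoint ?E * ?E) $$ (r,c) = (\<Sum>l<m*L. cnj (?E $$ (l,r)) * ?E $$ (l,c))"
    by (rule adj_mult_index[OF embed_carrier embed_carrier rc])
  also have "\<dots> = 1\<^sub>m (m*L) $$ (r,c)"
  proof (cases "a \<le> r \<and> r < a + 2*L \<and> a \<le> c \<and> c < a + 2*L")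
    case True
    have "(\<Sum>l<m*L. cnj (?E $$ (l,r)) * ?E $$ (l,c)) = (\<Sum>t<2*L. cnj (?E $$ (a+t,r)) * ?E $$ (a+t,c))"
      by (rule sum_window[OF am], use True rc Eidx in auto)
    also have "\<dots> = (\<Sum>t<2*L. cnj (Om $$ (t, r-a)) * Om $$ (t, c-a))"
      using True am rc by (intro sum.cong, auto simp: Eidx)
    also have "\<dots> = (mat_adjoint Om * Om) $$ (r-a, c-a)"
      using True by (intro adj_mult_index[OF Om Om, symmetric], auto)
    also have "\<dots> = 1\<^sub>m (m*L) $$ (r,c)" unfolding u using True rc by auto
    finally show ?thesis .
  next
    case False
    have "(\<Sum>l<m*L. cnj (?E $$ (l,r)) * ?E $$ (l,c)) = (\<Sum>l<m*L. if l = r then (if r = c then 1 else 0) else 0)"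
    proof (rule sum.cong[OF refl])
      fix l assume "l \<in> {..<m*L}"
      hence l: "l < m*L" by simp
      show "cnj (?E $$ (l,r)) * ?E $$ (l,c) = (if l = r then (if r = c then 1 else 0) else 0)"
        using False by (cases "a \<le> r \<and> r < a + 2*L"; cases "a \<le> l \<and> l < a + 2*L"; cases "l = r"; cases "l = c";
          auto simp add: Eidx[OF l rc(1)] Eidx[OF l rc(2)] Eidx[OF rc(1) rc(2)] Eidx[OF rc(2) rc(1)]
            Eidx[OF rc(1) rc(1)] Eidx[OF rc(2) rc(2)])
    qed
    also have "\<dots> = 1\<^sub>m (m*L) $$ (r,c)" using rc by simp
    finally show ?thesis .
  qed
  finally show "(mat_adjoint ?E * ?E) $$ (r,c) = 1\<^sub>m (m*L) $$ (r,c)" .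
qed auto


lemma qprod_unitary:
  assumes "k < m" and Om: "\<forall>i\<in>{1..k}. Om i \<in> carrier_mat (2*L) (2*L) \<and> mat_adjoint (Om i) * Om i = 1\<^sub>m (2*L)"
  shows "mat_adjoint (qprod L Om m k) * qprod L Om m k = 1\<^sub>m (m*L)"
  using assms
proof (induction k)
  case 0 then show ?case by simp
next
  case (Suc k)
  let ?E = "embed_rot L m (Suc k) (Om (Suc k))" and ?Q = "qprod L Om m k"
  have E: "?E \<in> carrier_mat (m*L) (m*L)" and Q: "?Q \<in> carrier_mat (m*L) (m*L)" by auto
  have IH: "mat_adjoint ?Q * ?Q = 1\<^sub>m (m*L)" using Suc by auto
  have uE: "mat_adjoint ?E * ?E = 1\<^sub>m (m*L)"
    using Suc.prems by (intro embed_unitary, auto)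
  have aE: "mat_adjoint ?E \<in> carrier_mat (m*L) (m*L)" and aQ: "mat_adjoint ?Q \<in> carrier_mat (m*L) (m*L)" by auto
  have "mat_adjoint (?E * ?Q) * (?E * ?Q) = (mat_adjoint ?Q * mat_adjoint ?E) * (?E * ?Q)"
    by (simp add: adj_mult[OF E Q])
  also have "\<dots> = mat_adjoint ?Q * (mat_adjoint ?E * (?E * ?Q))"
    by (rule assoc_mult_mat[OF aQ aE mult_carrier_mat[OF E Q]])
  also have "mat_adjoint ?E * (?E * ?Q) = (mat_adjoint ?E * ?E) * ?Q"
    by (rule assoc_mult_mat[OF aE E Q, symmetric])
  also have "\<dots> = ?Q" using uE left_mult_one_mat[OF Q] by simp
  also have "mat_adjoint ?Q * ?Q = 1\<^sub>m (m*L)" by (rule IH)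
  finally show ?case by simp
qed



lemma mult_index: assumes "(A::cmat) \<in> carrier_mat p q" "B \<in> carrier_mat q s" "r < p" "c < s"
  shows "(A * B) $$ (r,c) = (\<Sum>l<q. A $$ (r,l) * B $$ (l,c))"
  using assms by (auto simp: scalar_prod_def lessThan_atLeast0 intro!: sum.cong)

lemma q21_carrier[simp]: "q21 L X \<in> carrier_mat L L"
  by (simp add: q21_def subm_def)

lemma qprod_block:
  assumes "k < m"
  shows "(\<forall>ii<L. \<forall>c<L. qprod L Om m k $$ (k*L + ii, c) = q21prod L Om k $$ (ii,c))
       \<and> (\<forall>r c. (k+1)*L \<le> r \<longrightarrow> r < m*L \<longrightarrow> c < L \<longrightarrow> qprod L Om m k $$ (r,c) = 0)"
  using assms
proof (induction k)
  case 0
  have mL: "L \<le> m*L" using 0 by simp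
  show ?case
  proof (intro conjI allI impI)
    fix ii c assume h: "ii < L" "c < L"
    have "ii < m*L" "c < m*L" using h mL by linarith+
    with h show "qprod L Om m 0 $$ (0 * L + ii, c) = q21prod L Om 0 $$ (ii, c)" by simp
  next
    fix r c assume h: "(0 + 1) * L \<le> r" "r < m * L" "c < L"
    have "c < m*L" using h mL by linarith
    with h show "qprod L Om m 0 $$ (r, c) = 0" by simp
  qed
next
  case (Suc k)
  let ?E = "embed_rot L m (Suc k) (Om (Suc k))" and ?Q = "qprod L Om m k"
  define a where "a = k*L"
  from Suc have IH1: "\<And>ii c. ii < L \<Longrightarrow> c < L \<Longrightarrow> ?Q $$ (a + ii, c) = q21prod L Om k $$ (ii,c)"
    and IH2: "\<And>r c. a + L \<le> r \<Longrightarrow> r < m*L \<Longrightarrow> c < L \<Longrightarrow> ?Q $$ (r,c) = 0"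
    unfolding a_def by auto
  have am: "a + 2*L \<le> m*L"
  proof -
    have "Suc (Suc k) * L \<le> m * L" using Suc.prems by (intro mult_le_mono1, simp)
    thus ?thesis unfolding a_def by (simp add: algebra_simps)
  qed
  have ia: "(Suc k - 1)*L = a" "(Suc k + 1)*L = a + 2*L" unfolding a_def by (auto simp: algebra_simps)
  have Eidx: "\<And>r c. r < m*L \<Longrightarrow> c < m*L \<Longrightarrow> ?E $$ (r,c) =
      (if a \<le> r \<and> r < a + 2*L \<and> a \<le> c \<and> c < a + 2*L then Om (Suc k) $$ (r - a, c - a) else if r = c then 1 else 0)"
    unfolding embed_rot_def ia by (simp split del: if_split)
  have E: "?E \<in> carrier_mat (m*L) (m*L)" and Q: "?Q \<in> carrier_mat (m*L) (m*L)" by auto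
  have part1: "(?E * ?Q) $$ (a + L + ii, c) = (q21 L (Om (Suc k)) * q21prod L Om k) $$ (ii,c)"
    if ii: "ii < L" and c: "c < L" for ii c
  proof -
    have r: "a + L + ii < m*L" using am ii by simp
    have cm: "c < m*L" using am c by simp
    have "(?E * ?Q) $$ (a + L + ii, c) = (\<Sum>l<m*L. ?E $$ (a + L + ii, l) * ?Q $$ (l,c))"
      by (rule mult_index[OF E Q r cm])
    also have "\<dots> = (\<Sum>t<L+L. ?E $$ (a + L + ii, a + t) * ?Q $$ (a + t,c))"
      by (rule sum_window, use am in simp, use Eidx r ii in auto)
    also have "\<dots> = (\<Sum>t<L. ?E $$ (a + L + ii, a + t) * ?Q $$ (a + t,c))
        + (\<Sum>t<L. ?E $$ (a + L + ii, a + (L + t)) * ?Q $$ (a + (L + t),c))"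
      by (rule sum_split_add)
    also have "(\<Sum>t<L. ?E $$ (a + L + ii, a + (L + t)) * ?Q $$ (a + (L + t),c)) = 0"
      using am c by (intro sum.neutral, auto simp: IH2)
    also have "(\<Sum>t<L. ?E $$ (a + L + ii, a + t) * ?Q $$ (a + t,c))
       = (\<Sum>t<L. q21 L (Om (Suc k)) $$ (ii, t) * q21prod L Om k $$ (t,c))"
      using am ii c by (intro sum.cong refl, auto simp: Eidx IH1 q21_def subm_def IH1[of _ c, unfolded add.commute[of a]])
    also have "\<dots> = (q21 L (Om (Suc k)) * q21prod L Om k) $$ (ii,c)"
      by (rule mult_index[OF q21_carrier q21prod_carrier ii c, symmetric])
    finally show ?thesis by simp
  qed
  have part2: "(?E * ?Q) $$ (r, c) = 0" if r: "a + 2*L \<le> r" "r < m*L" and c: "c < L" for r c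
  proof -
    have cm: "c < m*L" using am c by simp
    have "(?E * ?Q) $$ (r, c) = (\<Sum>l<m*L. ?E $$ (r, l) * ?Q $$ (l,c))"
      by (rule mult_index[OF E Q r(2) cm])
    also have "\<dots> = (\<Sum>l<m*L. if l = r then ?Q $$ (r,c) else 0)"
      using r by (intro sum.cong refl, auto simp: Eidx)
    also have "\<dots> = 0" using r c IH2 by simp
    finally show ?thesis .
  qed
  show ?case
  proof (intro conjI allI impI)
    fix ii c assume "ii < L" "c < L"
    thus "qprod L Om m (Suc k) $$ (Suc k * L + ii, c) = q21prod L Om (Suc k) $$ (ii, c)"
      using part1[of ii c] unfolding a_def by (simp add: algebra_simps)
  next
    fix r c assume "(Suc k + 1) * L \<le> r" "r < m * L" "c < L"
    thus "qprod L Om m (Suc k) $$ (r, c) = 0" using part2[of r c] unfolding a_def by (simp add: algebra_simps)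
  qed
qed



lemma assoc2: "dim_col (A::cmat) = dim_row B \<Longrightarrow> dim_col B = dim_row C \<Longrightarrow> A * B * C = A * (B * C)"
  by (rule assoc_mult_mat[of A "dim_row A" "dim_col A" B "dim_col B" C "dim_col C"], auto)

lemma finish:
  assumes V1: "(V1::cmat) \<in> carrier_mat n L" "orthonormal_cols V1"
  and Z: "Z \<in> carrier_mat n m" "orthonormal_cols Z"
  and K: "K \<in> carrier_mat m L" and P: "P \<in> carrier_mat L L"
  and sum1: "mat_adjoint K * K + mat_adjoint P * P = 1\<^sub>m L"
  and ZV: "mat_adjoint Z * V1 = K"
  and U: "dim_row U = n" "orthonormal_cols U" "col_space U = col_space V1"
  and Y: "dim_row Y = n" "orthonormal_cols Y" "col_space Y = col_space Z"
  shows "image_mset sin (principal_angles U Y) = singular_values P"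
proof -
  define k where "k = dim_col U"
  define p where "p = dim_col Y"
  have Uc: "U \<in> carrier_mat n k" using U unfolding k_def by auto
  have Yc: "Y \<in> carrier_mat n p" using Y unfolding p_def by auto
  have aU: "mat_adjoint U \<in> carrier_mat k n" and aV: "mat_adjoint V1 \<in> carrier_mat L n"
    and aY: "mat_adjoint Y \<in> carrier_mat p n" and aZ: "mat_adjoint Z \<in> carrier_mat m n"
    using Uc V1 Yc Z by auto
  have uU: "mat_adjoint U * U = 1\<^sub>m k" by (rule orthD[OF U(2) Uc])
  have uV: "mat_adjoint V1 * V1 = 1\<^sub>m L" by (rule orthD[OF V1(2) V1(1)])
  define G where "G = mat_adjoint V1 * U"
  have Gc: "G \<in> carrier_mat L k" unfolding G_def using aV Uc by auto
  have aG: "mat_adjoint G \<in> carrier_mat k L" using Gc by auto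
  have UG: "V1 * G = U" unfolding G_def by (rule proj_fix_mat[OF V1(1) V1(2) Uc], use U in auto)
  have VU: "U * (mat_adjoint U * V1) = V1" by (rule proj_fix_mat[OF Uc U(2) V1(1)], use U in auto)
  have adjG: "mat_adjoint G = mat_adjoint U * V1" unfolding G_def using adj_mult[OF aV Uc] by simp
  have GG1: "mat_adjoint G * G = 1\<^sub>m k"
  proof -
    have "mat_adjoint G * G = mat_adjoint U * (V1 * G)"
      unfolding adjG by (rule assoc_mult_mat[OF aU V1(1) Gc])
    thus ?thesis using UG uU by simp
  qed
  have GG2: "G * mat_adjoint G = 1\<^sub>m L"
  proof -
    have "G * mat_adjoint G = mat_adjoint V1 * (U * (mat_adjoint U * V1))"
      unfolding adjG unfolding G_def by (rule assoc_mult_mat[OF aV Uc mult_carrier_mat[OF aU V1(1)]])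
    thus ?thesis using VU uV by simp
  qed
  have kL: "L = k" by (rule orth_dim[OF Gc GG1 GG2])
  have PY: "Y * mat_adjoint Y = Z * mat_adjoint Z" by (rule proj_eq[OF Yc Y(2) Z(1) Z(2) Y(3)])
  have ZU: "mat_adjoint Z * U = K * G"
  proof -
    have "mat_adjoint Z * U = mat_adjoint Z * (V1 * G)" using UG by simp
    also have "\<dots> = (mat_adjoint Z * V1) * G" by (rule assoc_mult_mat[OF aZ V1(1) Gc, symmetric])
    finally show ?thesis using ZV by simp
  qed
  have "mat_adjoint (mat_adjoint Y * U) * (mat_adjoint Y * U) = mat_adjoint U * ((Y * mat_adjoint Y) * U)"
    using adj_mult[OF aY Uc] Yc aY Uc aU by (simp add: assoc2)
  also have "\<dots> = mat_adjoint U * (Z * (mat_adjoint Z * U))" unfolding PY using Z aZ Uc by (simp add: assoc2)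
  also have "\<dots> = mat_adjoint (mat_adjoint Z * U) * (mat_adjoint Z * U)"
    using adj_mult[OF aZ Uc] Z aZ Uc aU by (simp add: assoc2)
  also have "\<dots> = mat_adjoint G * (mat_adjoint K * K) * G"
    unfolding ZU adj_mult[OF K Gc] using K Gc aG by (simp add: assoc2)
  finally have eq: "mat_adjoint (mat_adjoint Y * U) * (mat_adjoint Y * U) = mat_adjoint G * (mat_adjoint K * K) * G" .
  have M: "mat_adjoint K * K \<in> carrier_mat L L" using K by auto
  have sw: "similar_mat_wit (mat_adjoint G * (mat_adjoint K * K) * G) (mat_adjoint K * K) (mat_adjoint G) G"
    unfolding similar_mat_wit_def Let_def using M Gc aG GG1 GG2 kL by auto
  have cp: "char_poly (mat_adjoint (mat_adjoint Y * U) * (mat_adjoint Y * U)) = char_poly (mat_adjoint K * K)"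
    unfolding eq by (rule char_poly_similar, unfold similar_mat_def, use sw in blast)
  show ?thesis
    unfolding principal_angles_def singular_values_def cp
    by (rule spectral[OF K P sum1])
qed



theorem mainTheorem10:
  fixes n L j :: nat
    and A B X0 V1 S0 W H :: "complex mat"
    and Om :: "nat \<Rightarrow> complex mat"
  assumes "n \<ge> 1" "L \<ge> 1" "j \<ge> 1"
    and A: "A \<in> carrier_mat n n"
    and B: "B \<in> carrier_mat n L"
    and X0: "X0 \<in> carrier_mat n L"
    and V1: "V1 \<in> carrier_mat n L" "orthonormal_cols V1"
    and S0: "S0 \<in> carrier_mat L L" "upper_triangular S0"
    and QR0: "B - A * X0 = V1 * S0"
    and W: "W \<in> carrier_mat n ((j+1)*L)" "orthonormal_cols W"
    and W1: "subm W 0 0 n L = V1"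
    and H: "H \<in> carrier_mat ((j+1)*L) (j*L)"
    and hess: "\<forall>r < (j+1)*L. \<forall>c < j*L. r div L > c div L + 1 \<longrightarrow> H $$ (r,c) = 0"
    and subdiag: "\<forall>r < (j+1)*L. \<forall>c < j*L. r div L = c div L + 1 \<and> r mod L > c mod L \<longrightarrow> H $$ (r,c) = 0"
    and arnoldi: "A * subm W 0 0 n (j*L) = W * H"
    and fullrank: "\<forall>v \<in> carrier_vec (j*L). H *\<^sub>v v = 0\<^sub>v ((j+1)*L) \<longrightarrow> v = 0\<^sub>v (j*L)"
    and Om: "\<forall>i \<in> {1..j}. Om i \<in> carrier_mat (2*L) (2*L) \<and> unitary_mat (Om i)"
    and blockQR: "\<forall>k \<in> {1..j}.
        subm (qprod L Om (k+1) k * subm H 0 0 ((k+1)*L) (k*L)) (k*L) 0 L (k*L) = 0\<^sub>m L (k*L)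
      \<and> upper_triangular (subm (qprod L Om (k+1) k * subm H 0 0 ((k+1)*L) (k*L)) 0 0 (k*L) (k*L))
      \<and> det (subm (qprod L Om (k+1) k * subm H 0 0 ((k+1)*L) (k*L)) 0 0 (k*L) (k*L)) \<noteq> 0"
    and S0_nonsing: "det S0 \<noteq> 0"
  shows "\<forall>U Y. dim_row U = n \<and> orthonormal_cols U \<and> col_space U = col_space (B - A * X0)
           \<and> dim_row Y = n \<and> orthonormal_cols Y \<and> col_space Y = col_space (A * subm W 0 0 n (j*L))
           \<longrightarrow> image_mset sin (principal_angles U Y) = singular_values (q21prod L Om j)"
proof (intro allI impI)
  fix U Y
  assume hUY: "dim_row U = n \<and> orthonormal_cols U \<and> col_space U = col_space (B - A * X0)
           \<and> dim_row Y = n \<and> orthonormal_cols Y \<and> col_space Y = col_space (A * subm W 0 0 n (j*L))"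
  define N0 where "N0 = (j+1)*L"
  define m where "m = j*L"
  have N0m: "N0 = m + L" unfolding N0_def m_def by simp
  define Qb where "Qb = qprod L Om (j+1) j"
  have Qc: "Qb \<in> carrier_mat N0 N0" unfolding Qb_def N0_def by (rule qprod_carrier)
  have aQ: "mat_adjoint Qb \<in> carrier_mat N0 N0" using Qc by simp
  have Omu: "\<forall>i\<in>{1..j}. Om i \<in> carrier_mat (2*L) (2*L) \<and> mat_adjoint (Om i) * Om i = 1\<^sub>m (2*L)"
    using Om unfolding unitary_mat_def by auto
  have uQ: "mat_adjoint Qb * Qb = 1\<^sub>m N0" unfolding Qb_def N0_def
    by (rule qprod_unitary, simp, use Omu in auto)
  have uQ2: "Qb * mat_adjoint Qb = 1\<^sub>m N0" by (rule mat_mult_left_right_inverse[OF aQ Qc uQ])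
  have Wc: "W \<in> carrier_mat n N0" using W unfolding N0_def by simp
  have aW: "mat_adjoint W \<in> carrier_mat N0 n" using Wc by simp
  have uW: "mat_adjoint W * W = 1\<^sub>m N0" by (rule orthD[OF W(2) Wc])
  define T where "T = W * mat_adjoint Qb"
  have Tc: "T \<in> carrier_mat n N0" unfolding T_def using Wc aQ by simp
  have aT: "mat_adjoint T = Qb * mat_adjoint W" unfolding T_def using adj_mult[OF Wc aQ] by simp
  have TT: "mat_adjoint T * T = 1\<^sub>m N0"
  proof -
    have "mat_adjoint T * T = Qb * ((mat_adjoint W * W) * mat_adjoint Qb)"
      unfolding aT unfolding T_def using Qc aW Wc aQ by (simp add: assoc2)
    thus ?thesis using uW uQ2 left_mult_one_mat[OF aQ] by simp
  qed
  have TW: "mat_adjoint T * W = Qb"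
  proof -
    have "mat_adjoint T * W = Qb * (mat_adjoint W * W)"
      unfolding aT using Qc aW Wc by (simp add: assoc2)
    thus ?thesis using uW right_mult_one_mat[OF Qc] by simp
  qed
  have TQH: "T * (Qb * H) = W * H"
  proof -
    have "T * (Qb * H) = W * ((mat_adjoint Qb * Qb) * H)"
      unfolding T_def using Qc Wc aQ H unfolding N0_def by (simp add: assoc2)
    thus ?thesis using uQ left_mult_one_mat[OF H] unfolding N0_def by simp
  qed
  define Z where "Z = mat n m (\<lambda>(r,c). T $$ (r,c))"
  have Zc: "Z \<in> carrier_mat n m" unfolding Z_def by simp
  have Zidx: "\<And>r c. r < n \<Longrightarrow> c < m \<Longrightarrow> Z $$ (r,c) = T $$ (r,c)" unfolding Z_def by simp
  have oZ: "orthonormal_cols Z"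
    unfolding orthonormal_cols_def
  proof (rule eq_matI)
    fix r c assume rc: "r < dim_row (1\<^sub>m (dim_col Z))" "c < dim_col (1\<^sub>m (dim_col Z))"
    hence rc': "r < m" "c < m" using Zc by auto
    hence rc'': "r < N0" "c < N0" using N0m by auto
    have "(mat_adjoint Z * Z) $$ (r,c) = (\<Sum>i<n. cnj (Z $$ (i,r)) * Z $$ (i,c))"
      by (rule adj_mult_index[OF Zc Zc rc'])
    also have "\<dots> = (\<Sum>i<n. cnj (T $$ (i,r)) * T $$ (i,c))" using rc' by (intro sum.cong, auto simp: Zidx)
    also have "\<dots> = (mat_adjoint T * T) $$ (r,c)" by (rule adj_mult_index[OF Tc Tc rc'', symmetric])
    finally show "(mat_adjoint Z * Z) $$ (r,c) = 1\<^sub>m (dim_col Z) $$ (r,c)"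
      unfolding TT using rc' rc'' Zc by auto
  qed (use Zc in auto)
  have HQc: "Qb * H \<in> carrier_mat N0 m" using Qc H unfolding N0_def m_def by simp
  have Hsub: "subm H 0 0 ((j+1)*L) (j*L) = H" using H unfolding subm_def by (intro eq_matI, auto)
  have bj0: "subm (qprod L Om (j+1) j * subm H 0 0 ((j+1)*L) (j*L)) (j*L) 0 L (j*L) = 0\<^sub>m L (j*L)
      \<and> det (subm (qprod L Om (j+1) j * subm H 0 0 ((j+1)*L) (j*L)) 0 0 (j*L) (j*L)) \<noteq> 0"
    using blockQR \<open>j \<ge> 1\<close> by auto
  have bj: "subm (Qb * H) m 0 L m = 0\<^sub>m L m \<and> det (subm (Qb * H) 0 0 m m) \<noteq> 0"
    using bj0 unfolding Hsub Qb_def m_def .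
  have zero: "\<And>l c. l < L \<Longrightarrow> c < m \<Longrightarrow> (Qb * H) $$ (m + l, c) = 0"
  proof -
    fix l c assume lc: "l < L" "c < m"
    have "subm (Qb * H) m 0 L m $$ (l,c) = 0" using bj lc by simp
    thus "(Qb * H) $$ (m + l, c) = 0" using lc unfolding subm_def by simp
  qed
  define R where "R = subm (Qb * H) 0 0 m m"
  have Rc: "R \<in> carrier_mat m m" unfolding R_def subm_def by simp
  have detR: "det R \<noteq> 0" using bj unfolding R_def by simp
  have WH: "W * H = Z * R"
  proof (rule eq_matI)
    fix r c assume "r < dim_row (Z * R)" "c < dim_col (Z * R)"
    hence rc: "r < n" "c < m" using Zc Rc by auto
    have "(W * H) $$ (r,c) = (T * (Qb * H)) $$ (r,c)" using TQH by simp
    also have "\<dots> = (\<Sum>l<m+L. T $$ (r,l) * (Qb * H) $$ (l,c))"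
      using mult_index[OF Tc HQc rc] N0m by simp
    also have "\<dots> = (\<Sum>l<m. T $$ (r,l) * (Qb * H) $$ (l,c)) + (\<Sum>t<L. T $$ (r,m+t) * (Qb * H) $$ (m+t,c))"
      by (rule sum_split_add)
    also have "(\<Sum>t<L. T $$ (r,m+t) * (Qb * H) $$ (m+t,c)) = 0"
      using rc zero by (intro sum.neutral, auto)
    also have "(\<Sum>l<m. T $$ (r,l) * (Qb * H) $$ (l,c)) = (\<Sum>l<m. Z $$ (r,l) * R $$ (l,c))"
      using rc by (intro sum.cong, auto simp: Zidx R_def subm_def)
    also have "\<dots> = (Z * R) $$ (r,c)" by (rule mult_index[OF Zc Rc rc, symmetric])
    finally show "(W * H) $$ (r,c) = (Z * R) $$ (r,c)" by simp
  qed (use Zc Rc Wc H m_def in auto)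
  have csY: "col_space (A * subm W 0 0 n (j*L)) = col_space Z"
    using arnoldi WH col_space_mult_inv[OF Zc Rc detR] by simp
  have csU: "col_space (B - A * X0) = col_space V1"
    using QR0 col_space_mult_inv[OF V1(1) S0(1) S0_nonsing] by simp
  define K where "K = mat m L (\<lambda>(r,c). Qb $$ (r,c))"
  have Kc: "K \<in> carrier_mat m L" unfolding K_def by simp
  define P where "P = q21prod L Om j"
  have Pc: "P \<in> carrier_mat L L" unfolding P_def by simp
  have Pidx: "\<And>r c. r < L \<Longrightarrow> c < L \<Longrightarrow> P $$ (r,c) = Qb $$ (m + r, c)"
    using qprod_block[of j "j+1" L Om] unfolding P_def Qb_def m_def by simp
  have V1W: "\<And>i c. i < n \<Longrightarrow> c < L \<Longrightarrow> V1 $$ (i,c) = W $$ (i,c)"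
    using W1 unfolding subm_def by auto
  have ZV: "mat_adjoint Z * V1 = K"
  proof (rule eq_matI)
    fix r c assume "r < dim_row K" "c < dim_col K"
    hence rc: "r < m" "c < L" using Kc by auto
    hence rc': "r < N0" "c < N0" using N0m by auto
    have "(mat_adjoint Z * V1) $$ (r,c) = (\<Sum>i<n. cnj (Z $$ (i,r)) * V1 $$ (i,c))"
      by (rule adj_mult_index[OF Zc V1(1) rc])
    also have "\<dots> = (\<Sum>i<n. cnj (T $$ (i,r)) * W $$ (i,c))" using rc by (intro sum.cong, auto simp: Zidx V1W)
    also have "\<dots> = (mat_adjoint T * W) $$ (r,c)" by (rule adj_mult_index[OF Tc Wc rc', symmetric])
    finally show "(mat_adjoint Z * V1) $$ (r,c) = K $$ (r,c)" unfolding TW K_def using rc by simp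
  qed (use Zc V1 Kc in auto)
  have sum1: "mat_adjoint K * K + mat_adjoint P * P = 1\<^sub>m L"
  proof (rule eq_matI)
    fix r c assume "r < dim_row (1\<^sub>m L)" "c < dim_col (1\<^sub>m L)"
    hence rc: "r < L" "c < L" by auto
    hence rc': "r < N0" "c < N0" using N0m by auto
    have "(mat_adjoint K * K + mat_adjoint P * P) $$ (r,c) = (mat_adjoint K * K) $$ (r,c) + (mat_adjoint P * P) $$ (r,c)"
      using rc Kc Pc by simp
    also have "(mat_adjoint K * K) $$ (r,c) = (\<Sum>l<m. cnj (Qb $$ (l,r)) * Qb $$ (l,c))"
      using adj_mult_index[OF Kc Kc rc] rc unfolding K_def by simp
    also have "(mat_adjoint P * P) $$ (r,c) = (\<Sum>t<L. cnj (Qb $$ (m+t,r)) * Qb $$ (m+t,c))"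
      using adj_mult_index[OF Pc Pc rc] rc by (simp add: Pidx)
    also have "(\<Sum>l<m. cnj (Qb $$ (l,r)) * Qb $$ (l,c)) + (\<Sum>t<L. cnj (Qb $$ (m+t,r)) * Qb $$ (m+t,c))
        = (\<Sum>l<m+L. cnj (Qb $$ (l,r)) * Qb $$ (l,c))" by (rule sum_split_add[symmetric])
    also have "\<dots> = (mat_adjoint Qb * Qb) $$ (r,c)" using adj_mult_index[OF Qc Qc rc'] N0m by simp
    finally show "(mat_adjoint K * K + mat_adjoint P * P) $$ (r,c) = 1\<^sub>m L $$ (r,c)"
      unfolding uQ using rc rc' by simp
  qed (use Kc Pc in auto)
  show "image_mset sin (principal_angles U Y) = singular_values (q21prod L Om j)"
    unfolding P_def[symmetric]
    by (rule finish[OF V1 Zc oZ Kc Pc sum1 ZV], use hUY csU csY in auto)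
qed


end
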